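(* Let $\Gamma$ be a group acting on a set $X$ with only finitely many orbits, and let $n \in \mathbb{N}$. If for each orbit the stabilizer of a point of that orbit is $n$-boundedly acyclic, then $\operatorname{H}^k_b(\Gamma;\ell^\infty(X)) \cong 0$ for all $k \in \{1,\dots,n\}$.
   Context: $\ell^\infty(X)$ is the Banach $\Gamma$-module of bounded real functions on $X$ with the sup norm and action $(g\cdot f)(x) = f(g^{-1}x)$; $\operatorname{H}^*_b(\Gamma;V)$ is the cohomology of $\ell^\infty(\Gamma^{*+1},V)^\Gamma$ with homogeneous coboundary. A group is $n$-boundedly acyclic if its bounded cohomology with trivial real coefficients vanishes in degrees $1,\dots,n$. *)

theory Defs
  imports Complex_Main "HOL-Algebra.Group_Action"
begin

text \<open>Bounded cohomology of a group G with coefficients in the Banach G-module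
  ell-infinity(Y), where G acts on Y via psi and (g.F)(y) = F(g^-1 y).
  Homogeneous cochains of degree k are maps from G^(k+1) (lists of length k+1 of
  elements of the carrier) to ell-infinity(Y) (real functions on Y, only values on Y
  matter); they must be bounded in the sup norm and G-invariant.\<close>

definition tuples :: "('g, 'm) monoid_scheme \<Rightarrow> nat \<Rightarrow> 'g list set" where
  "tuples G m = {t. length t = m \<and> set t \<subseteq> carrier G}"

definition coboundary :: "('g list \<Rightarrow> 'y \<Rightarrow> real) \<Rightarrow> 'g list \<Rightarrow> 'y \<Rightarrow> real" where
  "coboundary f t y = (\<Sum>i<length t. (-1) ^ i * f (take i t @ drop (Suc i) t) y)"

definition is_bcochain ::
  "('g, 'm) monoid_scheme \<Rightarrow> 'y set \<Rightarrow> ('g \<Rightarrow> 'y \<Rightarrow> 'y) \<Rightarrow> nat \<Rightarrow> ('g list \<Rightarrow> 'y \<Rightarrow> real) \<Rightarrow> bool" where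
  "is_bcochain G Y \<psi> k f \<longleftrightarrow>
     (\<exists>C. \<forall>t\<in>tuples G (k+1). \<forall>y\<in>Y. \<bar>f t y\<bar> \<le> C) \<and>
     (\<forall>g\<in>carrier G. \<forall>t\<in>tuples G (k+1). \<forall>y\<in>Y.
        f (map (\<lambda>h. g \<otimes>\<^bsub>G\<^esub> h) t) y = f t (\<psi> (inv\<^bsub>G\<^esub> g) y))"

definition Hb_linf_vanishes ::
  "('g, 'm) monoid_scheme \<Rightarrow> 'y set \<Rightarrow> ('g \<Rightarrow> 'y \<Rightarrow> 'y) \<Rightarrow> nat \<Rightarrow> bool" where
  "Hb_linf_vanishes G Y \<psi> k \<longleftrightarrow>
     (\<forall>f. is_bcochain G Y \<psi> k f \<and>
          (\<forall>t\<in>tuples G (k+2). \<forall>y\<in>Y. coboundary f t y = 0)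
        \<longrightarrow> (\<exists>b. is_bcochain G Y \<psi> (k-1) b \<and>
                 (\<forall>t\<in>tuples G (k+1). \<forall>y\<in>Y. coboundary b t y = f t y)))"

text \<open>Trivial real coefficients: R = ell-infinity(point) with the trivial action.\<close>
definition Hb_trivial_vanishes :: "('g, 'm) monoid_scheme \<Rightarrow> nat \<Rightarrow> bool" where
  "Hb_trivial_vanishes G k \<longleftrightarrow> Hb_linf_vanishes G (UNIV :: unit set) (\<lambda>g y. y) k"

definition boundedly_acyclic :: "nat \<Rightarrow> ('g, 'm) monoid_scheme \<Rightarrow> bool" where
  "boundedly_acyclic n G \<longleftrightarrow> (\<forall>k\<in>{1..n}. Hb_trivial_vanishes G k)"

end

theory Submission
  imports Defs
begin

definition dface :: "nat \<Rightarrow> 'a list \<Rightarrow> 'a list" where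
  "dface i t = take i t @ drop (Suc i) t"

definition cob :: "('a list \<Rightarrow> real) \<Rightarrow> 'a list \<Rightarrow> real" where
  "cob F t = (\<Sum>i<length t. (-1) ^ i * F (dface i t))"

definition mix :: "('a \<Rightarrow> 'a) \<Rightarrow> nat \<Rightarrow> 'a list \<Rightarrow> 'a list" where
  "mix s j t = map s (take (Suc j) t) @ drop j t"

definition hmt :: "('a \<Rightarrow> 'a) \<Rightarrow> ('a list \<Rightarrow> real) \<Rightarrow> 'a list \<Rightarrow> real" where
  "hmt s F u = (\<Sum>j<length u. (-1) ^ j * F (mix s j u))"

lemma length_dface[simp]: "i < length t \<Longrightarrow> length (dface i t) = length t - 1"
  by (simp add: dface_def)

lemma nth_dface: "i < length t \<Longrightarrow> m < length t - 1 \<Longrightarrow>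
   dface i t ! m = (if m < i then t ! m else t ! Suc m)"
  by (auto simp: dface_def nth_append min_def)

lemma length_mix[simp]: "j < length t \<Longrightarrow> length (mix s j t) = Suc (length t)"
  by (simp add: mix_def)

lemma nth_mix: "j < length t \<Longrightarrow> m < Suc (length t) \<Longrightarrow>
   mix s j t ! m = (if m \<le> j then s (t ! m) else t ! (m - 1))"
  apply (auto simp: mix_def nth_append min_def)
  apply (subgoal_tac "j + m - length t = m - Suc 0")
   apply simp
  apply simp
  done

lemma face_a: "j < length t \<Longrightarrow> i < j \<Longrightarrow> dface i (mix s j t) = mix s (j - 1) (dface i t)"
  by (rule nth_equalityI) (auto simp: nth_dface nth_mix)

lemma face_b: "j < length t \<Longrightarrow> dface j (mix s j t) = map s (take j t) @ drop j t"
  by (rule nth_equalityI) (auto simp: nth_dface nth_mix nth_append)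

lemma face_c: "j < length t \<Longrightarrow> dface (Suc j) (mix s j t) = map s (take (Suc j) t) @ drop (Suc j) t"
  by (rule nth_equalityI) (auto simp: nth_dface nth_mix nth_append)

lemma face_d: "j < length t \<Longrightarrow> Suc j < i \<Longrightarrow> i \<le> length t \<Longrightarrow>
    dface i (mix s j t) = mix s j (dface (i - 1) t)"
  by (rule nth_equalityI) (auto simp: nth_dface nth_mix)

lemma split4: "j < n \<Longrightarrow> sum g {..<Suc n} = sum g {..<j} + g j + g (Suc j) + sum g {Suc (Suc j)..<Suc n}"
proof -
  assume "j < n"
  have "sum g {0..<Suc (Suc j)} + sum g {Suc (Suc j)..<Suc n} = sum g {0..<Suc n}"
    by (rule sum.atLeastLessThan_concat) (use \<open>j < n\<close> in auto)
  then have "sum g {..<Suc n} = sum g {0..<Suc (Suc j)} + sum g {Suc (Suc j)..<Suc n}"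
    by (simp add: atLeast0LessThan)
  moreover have "sum g {0..<Suc (Suc j)} = sum g {..<j} + g j + g (Suc j)"
    by (simp add: atLeast0LessThan)
  ultimately show ?thesis by simp
qed

lemma prism:
  assumes len: "length t = Suc k"
    and cyc: "\<And>j. j < Suc k \<Longrightarrow> cob F (mix s j t) = 0"
  shows "F t - F (map s t) = cob (hmt s F) t"
proof -
  define n where "n = Suc k"
  define R where "R j = F (map s (take j t) @ drop j t)" for j
  define T where "T j i = (-1) ^ (i + j) * F (mix s j (dface i t))" for j i
  define U where "U j = (\<Sum>i<j. (-1) ^ (i + j) * F (mix s (j - 1) (dface i t)))" for j
  define V where "V j = (\<Sum>i\<in>{Suc j..<n}. (-1) ^ (i + j + 1) * F (mix s j (dface i t)))" for j
  have lt: "length t = n" using len n_def by simp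
  have inner: "(-1) ^ j * cob F (mix s j t) = U j + R j - R (Suc j) + V j" if "j < n" for j
  proof -
    let ?g = "\<lambda>i. (-1) ^ i * F (dface i (mix s j t))"
    have "cob F (mix s j t) = sum ?g {..<Suc n}"
      using that lt by (simp add: cob_def)
    also have "\<dots> = sum ?g {..<j} + ?g j + ?g (Suc j) + sum ?g {Suc (Suc j)..<Suc n}"
      using that by (rule split4)
    also have "sum ?g {..<j} = (\<Sum>i<j. (-1) ^ i * F (mix s (j - 1) (dface i t)))"
      using that lt by (intro sum.cong) (auto simp: face_a)
    also have "?g j = (-1) ^ j * R j" using that lt by (simp add: face_b R_def)
    also have "?g (Suc j) = (-1) ^ Suc j * R (Suc j)" using that lt by (simp add: face_c R_def)
    also have "sum ?g {Suc (Suc j)..<Suc n} = (\<Sum>i\<in>{Suc j..<n}. ?g (Suc i))"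
      by (rule sum.shift_bounds_Suc_ivl)
    also have "\<dots> = (\<Sum>i\<in>{Suc j..<n}. (-1) ^ Suc i * F (mix s j (dface i t)))"
      using that lt by (intro sum.cong) (auto simp: face_d)
    finally have cobeq: "cob F (mix s j t) = (\<Sum>i<j. (-1) ^ i * F (mix s (j - 1) (dface i t))) +
        (-1) ^ j * R j + (-1) ^ Suc j * R (Suc j) +
        (\<Sum>i\<in>{Suc j..<n}. (-1) ^ Suc i * F (mix s j (dface i t)))" .
    have "(-1) ^ j * cob F (mix s j t) = (\<Sum>i<j. (-1) ^ j * ((-1) ^ i * F (mix s (j - 1) (dface i t)))) +
        (-1) ^ j * ((-1) ^ j * R j) + (-1) ^ j * ((-1) ^ Suc j * R (Suc j)) +
        (\<Sum>i\<in>{Suc j..<n}. (-1) ^ j * ((-1) ^ Suc i * F (mix s j (dface i t))))"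
      unfolding cobeq by (simp only: distrib_left sum_distrib_left)
    also have "\<dots> = U j + R j - R (Suc j) + V j"
      unfolding U_def V_def
      by (simp add: power_add mult_ac)
    finally show ?thesis .
  qed
  have "0 = (\<Sum>j<n. (-1) ^ j * cob F (mix s j t))"
    using cyc n_def by simp
  also have "\<dots> = (\<Sum>j<n. U j) + (\<Sum>j<n. R j - R (Suc j)) + (\<Sum>j<n. V j)"
  proof -
    have "(\<Sum>j<n. (-1) ^ j * cob F (mix s j t)) = (\<Sum>j<n. U j + (R j - R (Suc j)) + V j)"
      by (rule sum.cong) (simp_all add: inner)
    then show ?thesis by (simp add: sum.distrib)
  qed
  also have "(\<Sum>j<n. R j - R (Suc j)) = R 0 - R n"
    by (simp add: sum_lessThan_telescope')
  also have "R 0 = F t" by (simp add: R_def)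
  also have "R n = F (map s t)" using lt by (simp add: R_def)
  also have "(\<Sum>j<n. U j) = - (\<Sum>j<k. \<Sum>i<Suc j. T j i)"
  proof -
    have US: "U (Suc j) = - (\<Sum>i<Suc j. T j i)" for j
      unfolding U_def T_def by (simp del: sum.lessThan_Suc add: sum_negf[symmetric])
    have U0: "U 0 = 0" by (simp add: U_def)
    have "(\<Sum>j<n. U j) = U 0 + (\<Sum>j<k. U (Suc j))"
      by (simp only: n_def sum.lessThan_Suc_shift)
    also have "\<dots> = - (\<Sum>j<k. \<Sum>i<Suc j. T j i)"
      by (simp only: U0 US sum_negf add_0_left)
    finally show ?thesis .
  qed
  also have "(\<Sum>j<n. V j) = - (\<Sum>j<k. \<Sum>i\<in>{Suc j..<n}. T j i)"
    unfolding n_def sum.lessThan_Suc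
    by (simp add: V_def T_def n_def sum_negf[symmetric])
  finally have eq: "F t - F (map s t) = (\<Sum>j<k. (\<Sum>i<Suc j. T j i) + (\<Sum>i\<in>{Suc j..<n}. T j i))"
    by (simp add: sum.distrib)
  also have "\<dots> = (\<Sum>j<k. \<Sum>i<n. T j i)"
  proof (intro sum.cong refl)
    fix j assume "j \<in> {..<k}"
    then have "Suc j \<le> n" by (simp add: n_def)
    then have "sum (T j) {0..<Suc j} + sum (T j) {Suc j..<n} = sum (T j) {0..<n}"
      by (intro sum.atLeastLessThan_concat) auto
    then show "(\<Sum>i<Suc j. T j i) + (\<Sum>i\<in>{Suc j..<n}. T j i) = (\<Sum>i<n. T j i)"
      by (simp only: atLeast0LessThan)
  qed
  also have "\<dots> = (\<Sum>i<n. \<Sum>j<k. T j i)" by (rule sum.swap)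
  also have "\<dots> = cob (hmt s F) t"
    unfolding cob_def hmt_def lt
    by (intro sum.cong refl) (auto simp: T_def n_def lt len sum_distrib_left power_add mult_ac)
  finally show ?thesis .
qed

lemma coboundary_cob: "coboundary f t y = cob (\<lambda>s. f s y) t"
  by (simp add: coboundary_def cob_def dface_def)

lemma cob_add: "cob (\<lambda>s. A s + B s) t = cob A t + cob B t"
  by (simp add: cob_def sum.distrib distrib_left)

lemma dface_map: "dface i (map f t) = map f (dface i t)"
  by (simp add: dface_def take_map drop_map)

lemma cob_map: "cob (\<lambda>s. C (map f s)) t = cob C (map f t)"
  by (simp add: cob_def dface_map)

lemma mix_map: "(\<And>x. x \<in> set t \<Longrightarrow> s (f x) = f (s x)) \<Longrightarrow> mix s j (map f t) = map f (mix s j t)"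
  unfolding mix_def take_map drop_map map_append map_map
  by (auto dest: in_set_takeD)

lemma tuples_iff: "t \<in> tuples G m \<longleftrightarrow> length t = m \<and> set t \<subseteq> carrier G"
  by (simp add: tuples_def)

lemma set_mix: "set (mix s j t) \<subseteq> s ` set t \<union> set t"
  unfolding mix_def by (auto dest: in_set_takeD in_set_dropD)

lemma orbit_step:
  fixes G :: "('g, 'm) monoid_scheme" (structure) and F :: "'g list \<Rightarrow> real"
  assumes grp: "group G" and sub: "subgroup H G" and k1: "1 \<le> k"
    and acyc: "Hb_trivial_vanishes (G\<lparr>carrier := H\<rparr>) k"
    and Fb: "\<exists>C. \<forall>t\<in>tuples G (k+1). \<bar>F t\<bar> \<le> C"
    and Finv: "\<forall>h\<in>H. \<forall>t\<in>tuples G (k+1). F (map (\<lambda>x. h \<otimes>\<^bsub>G\<^esub> x) t) = F t"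
    and Fcyc: "\<forall>t\<in>tuples G (k+2). cob F t = 0"
  shows "\<exists>B. (\<exists>C. \<forall>t\<in>tuples G k. \<bar>B t\<bar> \<le> C) \<and>
             (\<forall>h\<in>H. \<forall>t\<in>tuples G k. B (map (\<lambda>x. h \<otimes>\<^bsub>G\<^esub> x) t) = B t) \<and>
             (\<forall>t\<in>tuples G (k+1). cob B t = F t)"
proof -
  interpret group G by (rule grp)
  let ?H = "G\<lparr>carrier := H\<rparr>"
  have Hsub: "H \<subseteq> carrier G" using sub by (rule subgroup.subset)
  define rep where "rep g = (if g \<in> H then \<one> else SOME r. r \<in> carrier G \<and> r \<otimes> inv g \<in> H)" for g
  define \<sigma> where "\<sigma> g = g \<otimes> inv (rep g)" for g
  have rep: "rep g \<in> carrier G \<and> rep g \<otimes> inv g \<in> H" if g: "g \<in> carrier G" for g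
  proof (cases "g \<in> H")
    case True
    then show ?thesis using sub g by (simp add: rep_def subgroup.m_inv_closed)
  next
    case False
    have "\<exists>r. r \<in> carrier G \<and> r \<otimes> inv g \<in> H"
      using g sub by (intro exI[of _ g]) (simp add: subgroup.one_closed)
    then have "(SOME r. r \<in> carrier G \<and> r \<otimes> inv g \<in> H) \<in> carrier G \<and>
        (SOME r. r \<in> carrier G \<and> r \<otimes> inv g \<in> H) \<otimes> inv g \<in> H"
      by (rule someI_ex)
    then show ?thesis using False unfolding rep_def by simp
  qed
  have \<sigma>H: "\<sigma> g \<in> H" if g: "g \<in> carrier G" for g
  proof -
    have "\<sigma> g = inv (rep g \<otimes> inv g)"
      using rep[OF g] g by (simp add: \<sigma>_def inv_mult_group)
    then show ?thesis using rep[OF g] sub by (simp add: subgroup.m_inv_closed)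
  qed
  have \<sigma>G: "\<sigma> g \<in> carrier G" if "g \<in> carrier G" for g
    using \<sigma>H[OF that] Hsub by blast
  have \<sigma>id: "\<sigma> h = h" if "h \<in> H" for h
    using that Hsub by (auto simp: \<sigma>_def rep_def)
  have rep_mult: "rep (h \<otimes> g) = rep g" if h: "h \<in> H" and g: "g \<in> carrier G" for h g
  proof -
    have hG: "h \<in> carrier G" using h Hsub by blast
    have 1: "h \<otimes> g \<in> H \<longleftrightarrow> g \<in> H"
    proof
      assume "h \<otimes> g \<in> H"
      then have "inv h \<otimes> (h \<otimes> g) \<in> H" using h sub
        by (simp add: subgroup.m_closed subgroup.m_inv_closed)
      then show "g \<in> H" using hG g by (simp add: m_assoc[symmetric])
    next
      assume "g \<in> H" then show "h \<otimes> g \<in> H" using h sub by (simp add: subgroup.m_closed)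
    qed
    have 2: "(\<lambda>r. r \<in> carrier G \<and> r \<otimes> inv (h \<otimes> g) \<in> H) = (\<lambda>r. r \<in> carrier G \<and> r \<otimes> inv g \<in> H)"
    proof (intro ext iffI conjI)
      fix r assume r: "r \<in> carrier G \<and> r \<otimes> inv (h \<otimes> g) \<in> H"
      then have "r \<otimes> inv (h \<otimes> g) \<otimes> h \<in> H" using h sub by (simp add: subgroup.m_closed)
      moreover have "r \<otimes> inv (h \<otimes> g) \<otimes> h = r \<otimes> inv g"
        using r hG g by (simp add: inv_mult_group m_assoc)
      ultimately show "r \<otimes> inv g \<in> H" by simp
      show "r \<in> carrier G" using r by simp
    next
      fix r assume r: "r \<in> carrier G \<and> r \<otimes> inv g \<in> H"
      then have "r \<otimes> inv g \<otimes> inv h \<in> H" using h sub by (simp add: subgroup.m_closed subgroup.m_inv_closed)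
      moreover have "r \<otimes> inv g \<otimes> inv h = r \<otimes> inv (h \<otimes> g)"
        using r hG g by (simp add: inv_mult_group m_assoc)
      ultimately show "r \<otimes> inv (h \<otimes> g) \<in> H" by simp
      show "r \<in> carrier G" using r by simp
    qed
    show ?thesis unfolding rep_def 1 2 ..
  qed
  have \<sigma>mult: "\<sigma> (h \<otimes> g) = h \<otimes> \<sigma> g" if h: "h \<in> H" and g: "g \<in> carrier G" for h g
    using h g Hsub rep[OF g] by (auto simp: \<sigma>_def rep_mult m_assoc)
  have cochF: "is_bcochain ?H (UNIV :: unit set) (\<lambda>g y. y) k (\<lambda>t y. F t)"
    unfolding is_bcochain_def
  proof (intro conjI)
    obtain C where C: "\<forall>t\<in>tuples G (k+1). \<bar>F t\<bar> \<le> C" using Fb by blast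
    show "\<exists>C. \<forall>t\<in>tuples ?H (k + 1). \<forall>y\<in>(UNIV :: unit set). \<bar>F t\<bar> \<le> C"
      using C Hsub by (intro exI[of _ C]) (auto simp: tuples_iff)
    show "\<forall>g\<in>carrier ?H. \<forall>t\<in>tuples ?H (k + 1). \<forall>y\<in>(UNIV :: unit set).
        F (map (\<lambda>h. g \<otimes>\<^bsub>?H\<^esub> h) t) = F t"
      using Finv Hsub by (auto simp: tuples_iff)
  qed
  have cycF: "\<forall>t\<in>tuples ?H (k+2). \<forall>y\<in>(UNIV :: unit set). coboundary (\<lambda>t y. F t) t y = 0"
    using Fcyc Hsub by (auto simp: tuples_iff coboundary_cob)
  obtain b where bco: "is_bcochain ?H (UNIV :: unit set) (\<lambda>g y. y) (k-1) b"
    and bcob: "\<forall>t\<in>tuples ?H (k+1). \<forall>y\<in>UNIV. coboundary b t y = F t"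
  proof -
    have all: "\<forall>f. is_bcochain ?H (UNIV :: unit set) (\<lambda>g y. y) k f \<and>
         (\<forall>t\<in>tuples ?H (k + 2). \<forall>y\<in>UNIV. coboundary f t y = 0) \<longrightarrow>
         (\<exists>b. is_bcochain ?H UNIV (\<lambda>g y. y) (k - 1) b \<and>
              (\<forall>t\<in>tuples ?H (k + 1). \<forall>y\<in>UNIV. coboundary b t y = f t y))"
      using acyc unfolding Hb_trivial_vanishes_def Hb_linf_vanishes_def .
    have "\<exists>b. is_bcochain ?H (UNIV :: unit set) (\<lambda>g y. y) (k - 1) b \<and>
              (\<forall>t\<in>tuples ?H (k + 1). \<forall>y\<in>(UNIV :: unit set). coboundary b t y = F t)"
      by (rule mp[OF spec[OF all, of "\<lambda>t y. F t"] conjI[OF cochF cycF]])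
    then show ?thesis using that by blast
  qed
  have km: "k - 1 + 1 = k" using k1 by simp
  obtain Cb where Cb: "\<forall>t\<in>tuples ?H k. \<bar>b t ()\<bar> \<le> Cb"
    using bco unfolding is_bcochain_def km by blast
  have binv: "\<forall>h\<in>H. \<forall>t\<in>tuples ?H k. b (map (\<lambda>x. h \<otimes> x) t) () = b t ()"
    using bco unfolding is_bcochain_def km by simp
  obtain CF where CF: "\<forall>t\<in>tuples G (k+1). \<bar>F t\<bar> \<le> CF" using Fb by blast
  define B where "B s = b (map \<sigma> s) () + hmt \<sigma> F s" for s
  have maptup: "map \<sigma> s \<in> tuples ?H m" if "s \<in> tuples G m" for s m
    using that \<sigma>H by (auto simp: tuples_iff)
  have mixtup: "mix \<sigma> j s \<in> tuples G (Suc m)" if "s \<in> tuples G m" "j < m" for s m j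
    using that set_mix[of \<sigma> j s] \<sigma>G by (auto simp: tuples_iff)
  show ?thesis
  proof (intro exI[of _ B] conjI ballI)
    show "\<exists>C. \<forall>t\<in>tuples G k. \<bar>B t\<bar> \<le> C"
    proof (intro exI[of _ "\<bar>Cb\<bar> + real k * \<bar>CF\<bar>"] ballI)
      fix t assume t: "t \<in> tuples G k"
      have 1: "\<bar>b (map \<sigma> t) ()\<bar> \<le> \<bar>Cb\<bar>" using Cb maptup[OF t] by force
      have "\<bar>hmt \<sigma> F t\<bar> \<le> (\<Sum>j<length t. \<bar>(-1) ^ j * F (mix \<sigma> j t)\<bar>)"
        unfolding hmt_def by (rule sum_abs)
      also have "\<dots> \<le> of_nat (card {..<length t}) * \<bar>CF\<bar>"
      proof (rule sum_bounded_above)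
        fix j assume "j \<in> {..<length t}"
        then have "mix \<sigma> j t \<in> tuples G (k+1)" using mixtup[OF t] t by (simp add: tuples_iff)
        then show "\<bar>(-1) ^ j * F (mix \<sigma> j t)\<bar> \<le> \<bar>CF\<bar>" using CF by (force simp: abs_mult)
      qed
      also have "\<dots> = real k * \<bar>CF\<bar>" using t by (simp add: tuples_iff)
      finally show "\<bar>B t\<bar> \<le> \<bar>Cb\<bar> + real k * \<bar>CF\<bar>" using 1 unfolding B_def by linarith
    qed
  next
    fix h t assume h: "h \<in> H" and t: "t \<in> tuples G k"
    have hG: "h \<in> carrier G" using h Hsub by blast
    have comm: "\<sigma> (h \<otimes> x) = h \<otimes> \<sigma> x" if "x \<in> set t" for x
      using that t h \<sigma>mult by (auto simp: tuples_iff)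
    have "map \<sigma> (map (\<lambda>x. h \<otimes> x) t) = map (\<lambda>x. h \<otimes> x) (map \<sigma> t)"
      using comm by simp
    moreover have "b (map (\<lambda>x. h \<otimes> x) (map \<sigma> t)) () = b (map \<sigma> t) ()"
      using binv h maptup[OF t] by blast
    ultimately have 1: "b (map \<sigma> (map (\<lambda>x. h \<otimes> x) t)) () = b (map \<sigma> t) ()"
      by metis
    have "hmt \<sigma> F (map (\<lambda>x. h \<otimes> x) t) = hmt \<sigma> F t"
      unfolding hmt_def length_map
    proof (intro sum.cong refl)
      fix j assume j: "j \<in> {..<length t}"
      have "mix \<sigma> j (map (\<lambda>x. h \<otimes> x) t) = map (\<lambda>x. h \<otimes> x) (mix \<sigma> j t)"
        by (rule mix_map) (rule comm)
      moreover have "mix \<sigma> j t \<in> tuples G (k+1)" using mixtup[OF t] j t by (simp add: tuples_iff)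
      ultimately show "(-1) ^ j * F (mix \<sigma> j (map (\<lambda>x. h \<otimes> x) t)) = (-1) ^ j * F (mix \<sigma> j t)"
        using Finv h by simp
    qed
    with 1 show "B (map (\<lambda>x. h \<otimes> x) t) = B t" by (simp add: B_def)
  next
    fix t assume t: "t \<in> tuples G (k+1)"
    have "cob B t = cob (\<lambda>s. b s ()) (map \<sigma> t) + cob (hmt \<sigma> F) t"
      unfolding B_def cob_add cob_map[of "\<lambda>s. b s ()"] ..
    also have "cob (\<lambda>s. b s ()) (map \<sigma> t) = F (map \<sigma> t)"
      using bcob maptup[OF t] by (simp add: coboundary_cob)
    also have "cob (hmt \<sigma> F) t = F t - F (map \<sigma> t)"
    proof (rule prism[symmetric])
      show "length t = Suc k" using t by (simp add: tuples_iff)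
      fix j assume "j < Suc k"
      then have "mix \<sigma> j t \<in> tuples G (k+2)" using mixtup[OF t] by simp
      then show "cob F (mix \<sigma> j t) = 0" using Fcyc by blast
    qed
    finally show "cob B t = F t" by simp
  qed
qed

lemma act_facts:
  assumes "group G" "group_action G X \<phi>"
  shows "\<And>a b z. a \<in> carrier G \<Longrightarrow> b \<in> carrier G \<Longrightarrow> z \<in> X \<Longrightarrow> \<phi> (a \<otimes>\<^bsub>G\<^esub> b) z = \<phi> a (\<phi> b z)"
    and "\<And>z. z \<in> X \<Longrightarrow> \<phi> \<one>\<^bsub>G\<^esub> z = z"
    and "\<And>a z. a \<in> carrier G \<Longrightarrow> z \<in> X \<Longrightarrow> \<phi> a z \<in> X"
proof -
  interpret group_action G X \<phi> by fact
  show "\<And>a b z. a \<in> carrier G \<Longrightarrow> b \<in> carrier G \<Longrightarrow> z \<in> X \<Longrightarrow> \<phi> (a \<otimes>\<^bsub>G\<^esub> b) z = \<phi> a (\<phi> b z)"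
    by (simp add: composition_rule)
  show "\<And>z. z \<in> X \<Longrightarrow> \<phi> \<one>\<^bsub>G\<^esub> z = z"
    by (metis id_eq_one restrict_apply')
  show "\<And>a z. a \<in> carrier G \<Longrightarrow> z \<in> X \<Longrightarrow> \<phi> a z \<in> X"
    using element_image by blast
qed

lemma exP_lemma:
  fixes G :: "('g, 'm) monoid_scheme" and X :: "'x set" and \<phi> :: "'g \<Rightarrow> 'x \<Rightarrow> 'x"
  assumes grp: "group G" and act: "group_action G X \<phi>" and x: "x \<in> X"
    and ac: "boundedly_acyclic n (G\<lparr>carrier := stabilizer G \<phi> x\<rparr>)"
    and kn: "k \<in> {1..n}"
    and Cf: "\<forall>t\<in>tuples G (k+1). \<forall>y\<in>X. \<bar>f t y\<bar> \<le> Cf"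
    and finv: "\<forall>g\<in>carrier G. \<forall>t\<in>tuples G (k+1). \<forall>y\<in>X.
        f (map (\<lambda>h. g \<otimes>\<^bsub>G\<^esub> h) t) y = f t (\<phi> (inv\<^bsub>G\<^esub> g) y)"
    and fcyc: "\<forall>t\<in>tuples G (k + 2). \<forall>y\<in>X. coboundary f t y = 0"
  shows "\<exists>B. (\<exists>C. \<forall>t\<in>tuples G k. \<bar>B t\<bar> \<le> C) \<and>
             (\<forall>h\<in>stabilizer G \<phi> x. \<forall>t\<in>tuples G k. B (map (\<lambda>z. h \<otimes>\<^bsub>G\<^esub> z) t) = B t) \<and>
             (\<forall>t\<in>tuples G (k+1). cob B t = f t x)"
proof (rule orbit_step[where F="\<lambda>t. f t x" and H="stabilizer G \<phi> x"])
  interpret A: group_action G X \<phi> by (rule act)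
  show "group G" by (rule grp)
  show "subgroup (stabilizer G \<phi> x) G" using x by (rule A.stabilizer_subgroup)
  show "1 \<le> k" using kn by simp
  show "Hb_trivial_vanishes (G\<lparr>carrier := stabilizer G \<phi> x\<rparr>) k"
    using ac kn unfolding boundedly_acyclic_def by blast
  show "\<exists>C. \<forall>t\<in>tuples G (k + 1). \<bar>f t x\<bar> \<le> C" using Cf x by blast
  show "\<forall>h\<in>stabilizer G \<phi> x. \<forall>t\<in>tuples G (k + 1). f (map (\<lambda>z. h \<otimes>\<^bsub>G\<^esub> z) t) x = f t x"
  proof (intro ballI)
    fix h t assume h: "h \<in> stabilizer G \<phi> x" and t: "t \<in> tuples G (k + 1)"
    have "inv\<^bsub>G\<^esub> h \<in> stabilizer G \<phi> x" using A.stabilizer_m_inv_closed[OF x h] .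
    then have 1: "\<phi> (inv\<^bsub>G\<^esub> h) x = x" by (simp add: stabilizer_def)
    have hG: "h \<in> carrier G" using h by (simp add: stabilizer_def)
    have "f (map (\<lambda>z. h \<otimes>\<^bsub>G\<^esub> z) t) x = f t (\<phi> (inv\<^bsub>G\<^esub> h) x)"
      using finv hG t x by blast
    then show "f (map (\<lambda>z. h \<otimes>\<^bsub>G\<^esub> z) t) x = f t x" by (simp only: 1)
  qed
  show "\<forall>t\<in>tuples G (k + 2). cob (\<lambda>t. f t x) t = 0"
  proof
    fix t assume "t \<in> tuples G (k + 2)"
    then have "coboundary f t x = 0" using fcyc x by blast
    then show "cob (\<lambda>t. f t x) t = 0" by (simp only: coboundary_cob)
  qed
qed

theorem lemma6p10:
  fixes G :: "('g, 'm) monoid_scheme" and X :: "'x set" and \<phi> :: "'g \<Rightarrow> 'x \<Rightarrow> 'x"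
    and n :: nat
  assumes "group G"
    and "group_action G X \<phi>"
    and "finite (orbits G X \<phi>)"
    and "\<forall>Orb\<in>orbits G X \<phi>. \<exists>x\<in>Orb.
           boundedly_acyclic n (G\<lparr>carrier := stabilizer G \<phi> x\<rparr>)"
  shows "\<forall>k\<in>{1..n}. Hb_linf_vanishes G X \<phi> k"
proof
  fix k assume kn: "k \<in> {1..n}"
  interpret G: group G by fact
  note comp = act_facts(1)[OF assms(1,2)]
  note one = act_facts(2)[OF assms(1,2)]
  note clos = act_facts(3)[OF assms(1,2)]
  have invact: "\<phi> (inv\<^bsub>G\<^esub> a) (\<phi> a z) = z" if "a \<in> carrier G" "z \<in> X" for a z
    using that by (simp add: comp[symmetric] one)
  have orbit_act: "orbit G \<phi> (\<phi> a y) = orbit G \<phi> y" if a: "a \<in> carrier G" and y: "y \<in> X" for a y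
  proof
    show "orbit G \<phi> (\<phi> a y) \<subseteq> orbit G \<phi> y"
    proof
      fix z assume "z \<in> orbit G \<phi> (\<phi> a y)"
      then obtain g where g: "g \<in> carrier G" and z: "z = \<phi> g (\<phi> a y)" unfolding orbit_def by blast
      have "z = \<phi> (g \<otimes>\<^bsub>G\<^esub> a) y" using g a y z by (simp add: comp)
      then show "z \<in> orbit G \<phi> y" unfolding orbit_def using g a by blast
    qed
    show "orbit G \<phi> y \<subseteq> orbit G \<phi> (\<phi> a y)"
    proof
      fix z assume "z \<in> orbit G \<phi> y"
      then obtain g where g: "g \<in> carrier G" and z: "z = \<phi> g y" unfolding orbit_def by blast
      have "z = \<phi> (g \<otimes>\<^bsub>G\<^esub> inv\<^bsub>G\<^esub> a) (\<phi> a y)"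
        using g a y z by (simp add: comp[symmetric] G.m_assoc)
      then show "z \<in> orbit G \<phi> (\<phi> a y)" unfolding orbit_def using g a by blast
    qed
  qed
  show "Hb_linf_vanishes G X \<phi> k"
    unfolding Hb_linf_vanishes_def
  proof (intro allI impI)
    fix f assume "is_bcochain G X \<phi> k f \<and> (\<forall>t\<in>tuples G (k + 2). \<forall>y\<in>X. coboundary f t y = 0)"
    then have fco: "is_bcochain G X \<phi> k f" and fcyc: "\<forall>t\<in>tuples G (k + 2). \<forall>y\<in>X. coboundary f t y = 0"
      by auto
    obtain Cf where Cf: "\<forall>t\<in>tuples G (k+1). \<forall>y\<in>X. \<bar>f t y\<bar> \<le> Cf"
      using fco unfolding is_bcochain_def by blast
    have finv: "\<forall>g\<in>carrier G. \<forall>t\<in>tuples G (k+1). \<forall>y\<in>X.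
        f (map (\<lambda>h. g \<otimes>\<^bsub>G\<^esub> h) t) y = f t (\<phi> (inv\<^bsub>G\<^esub> g) y)"
      using fco unfolding is_bcochain_def by blast
    define P where "P x B \<longleftrightarrow> (\<exists>C. \<forall>t\<in>tuples G k. \<bar>B t\<bar> \<le> C) \<and>
             (\<forall>h\<in>stabilizer G \<phi> x. \<forall>t\<in>tuples G k. B (map (\<lambda>z. h \<otimes>\<^bsub>G\<^esub> z) t) = B t) \<and>
             (\<forall>t\<in>tuples G (k+1). cob B t = f t x)" for x and B :: "'g list \<Rightarrow> real"
    have exP: "\<exists>B. P x B" if x: "x \<in> X" and ac: "boundedly_acyclic n (G\<lparr>carrier := stabilizer G \<phi> x\<rparr>)" for x
      unfolding P_def by (rule exP_lemma[OF assms(1,2) x ac kn Cf finv fcyc])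
    define xo where "xo Ob = (SOME x. x \<in> Ob \<and> boundedly_acyclic n (G\<lparr>carrier := stabilizer G \<phi> x\<rparr>))" for Ob
    define xp where "xp y = xo (orbit G \<phi> y)" for y
    have xp: "xp y \<in> orbit G \<phi> y \<and> boundedly_acyclic n (G\<lparr>carrier := stabilizer G \<phi> (xp y)\<rparr>)"
      if y: "y \<in> X" for y
    proof -
      have "orbit G \<phi> y \<in> orbits G X \<phi>" using y unfolding orbits_def by blast
      then have "\<exists>x. x \<in> orbit G \<phi> y \<and> boundedly_acyclic n (G\<lparr>carrier := stabilizer G \<phi> x\<rparr>)"
        using assms(4) by blast
      then show ?thesis unfolding xp_def xo_def by (rule someI_ex)
    qed
    have xpX: "xp y \<in> X" if y: "y \<in> X" for y
    proof -
      obtain a where a: "a \<in> carrier G" "xp y = \<phi> a y" using xp[OF y] unfolding orbit_def by blast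
      then show ?thesis using clos[OF a(1) y] by simp
    qed
    define gp where "gp y = (SOME g. g \<in> carrier G \<and> \<phi> g (xp y) = y)" for y
    have gp: "gp y \<in> carrier G \<and> \<phi> (gp y) (xp y) = y" if y: "y \<in> X" for y
    proof -
      obtain a where a: "a \<in> carrier G" "xp y = \<phi> a y" using xp[OF y] unfolding orbit_def by blast
      then have "inv\<^bsub>G\<^esub> a \<in> carrier G \<and> \<phi> (inv\<^bsub>G\<^esub> a) (xp y) = y" using invact y by simp
      then have "\<exists>g. g \<in> carrier G \<and> \<phi> g (xp y) = y" by blast
      then show ?thesis unfolding gp_def by (rule someI_ex)
    qed
    define Bx where "Bx x = (SOME B. P x B)" for x
    have Bx: "P (xp y) (Bx (xp y))" if "y \<in> X" for y
      unfolding Bx_def using exP[OF xpX[OF that] conjunct2[OF xp[OF that]]] by (rule someI_ex)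
    define Cx where "Cx x = (SOME C. \<forall>t\<in>tuples G k. \<bar>Bx x t\<bar> \<le> C)" for x
    have Cx: "\<forall>t\<in>tuples G k. \<bar>Bx (xp y) t\<bar> \<le> Cx (xp y)" if "y \<in> X" for y
    proof -
      have "\<exists>C. \<forall>t\<in>tuples G k. \<bar>Bx (xp y) t\<bar> \<le> C" using Bx[OF that] unfolding P_def by blast
      then show ?thesis unfolding Cx_def by (rule someI_ex)
    qed
    define b where "b s y = Bx (xp y) (map (\<lambda>z. inv\<^bsub>G\<^esub> (gp y) \<otimes>\<^bsub>G\<^esub> z) s)" for s y
    have maptup: "map (\<lambda>z. a \<otimes>\<^bsub>G\<^esub> z) s \<in> tuples G m" if "a \<in> carrier G" "s \<in> tuples G m" for a s m
      using that by (auto simp: tuples_iff)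
    have km: "k - 1 + 1 = k" using kn by simp
    show "\<exists>b. is_bcochain G X \<phi> (k - 1) b \<and> (\<forall>t\<in>tuples G (k + 1). \<forall>y\<in>X. coboundary b t y = f t y)"
    proof (intro exI[of _ b] conjI)
      show "is_bcochain G X \<phi> (k - 1) b"
        unfolding is_bcochain_def km
      proof (intro conjI)
        show "\<exists>C. \<forall>t\<in>tuples G k. \<forall>y\<in>X. \<bar>b t y\<bar> \<le> C"
        proof (intro exI[of _ "\<Sum>Ob\<in>orbits G X \<phi>. \<bar>Cx (xo Ob)\<bar>"] ballI)
          fix t y assume t: "t \<in> tuples G k" and y: "y \<in> X"
          have "\<bar>b t y\<bar> \<le> Cx (xp y)"
            unfolding b_def using Cx[OF y] maptup gp[OF y] t by simp
          also have "\<dots> \<le> \<bar>Cx (xo (orbit G \<phi> y))\<bar>" by (simp add: xp_def)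
          also have "\<dots> \<le> (\<Sum>Ob\<in>orbits G X \<phi>. \<bar>Cx (xo Ob)\<bar>)"
            by (rule member_le_sum) (use y assms(3) in \<open>auto simp: orbits_def\<close>)
          finally show "\<bar>b t y\<bar> \<le> (\<Sum>Ob\<in>orbits G X \<phi>. \<bar>Cx (xo Ob)\<bar>)" .
        qed
        show "\<forall>g\<in>carrier G. \<forall>t\<in>tuples G k. \<forall>y\<in>X. b (map (\<lambda>h. g \<otimes>\<^bsub>G\<^esub> h) t) y = b t (\<phi> (inv\<^bsub>G\<^esub> g) y)"
        proof (intro ballI)
          fix g t y assume g: "g \<in> carrier G" and t: "t \<in> tuples G k" and y: "y \<in> X"
          define y' where "y' = \<phi> (inv\<^bsub>G\<^esub> g) y"
          have y': "y' \<in> X" using clos g y by (simp add: y'_def)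
          have same: "xp y' = xp y" unfolding xp_def y'_def using orbit_act g y by simp
          define x where "x = xp y"
          define g1 where "g1 = gp y"
          define g2 where "g2 = gp y'"
          have g1: "g1 \<in> carrier G" "\<phi> g1 x = y" using gp[OF y] by (simp_all add: g1_def x_def)
          have g2: "g2 \<in> carrier G" "\<phi> g2 x = y'" using gp[OF y'] same by (simp_all add: g2_def x_def)
          have x: "x \<in> X" using xpX[OF y] by (simp add: x_def)
          define h where "h = inv\<^bsub>G\<^esub> g2 \<otimes>\<^bsub>G\<^esub> inv\<^bsub>G\<^esub> g \<otimes>\<^bsub>G\<^esub> g1"
          have hG: "h \<in> carrier G" using g g1 g2 by (simp add: h_def)
          have "\<phi> h x = \<phi> (inv\<^bsub>G\<^esub> g2) (\<phi> (inv\<^bsub>G\<^esub> g) (\<phi> g1 x))"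
            using g g1 g2 x y clos by (simp add: h_def comp)
          also have "\<dots> = x"
          proof -
            have "\<phi> (inv\<^bsub>G\<^esub> g2) y' = x" using invact[OF g2(1) x] g2(2) by simp
            then show ?thesis using g1 by (simp add: y'_def[symmetric])
          qed
          finally have hS: "h \<in> stabilizer G \<phi> x" using hG by (simp add: stabilizer_def)
          have Px: "P x (Bx x)" using Bx[OF y] by (simp add: x_def)
          have eqmap: "map (\<lambda>z. inv\<^bsub>G\<^esub> g2 \<otimes>\<^bsub>G\<^esub> z) t =
              map (\<lambda>z. h \<otimes>\<^bsub>G\<^esub> z) (map (\<lambda>z. inv\<^bsub>G\<^esub> g1 \<otimes>\<^bsub>G\<^esub> z) (map (\<lambda>z. g \<otimes>\<^bsub>G\<^esub> z) t))"
          proof -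
            have cancel: "a \<otimes>\<^bsub>G\<^esub> (inv\<^bsub>G\<^esub> a \<otimes>\<^bsub>G\<^esub> c) = c" if "a \<in> carrier G" "c \<in> carrier G" for a c
              using that by (simp add: G.m_assoc[symmetric])
            have cancel2: "inv\<^bsub>G\<^esub> a \<otimes>\<^bsub>G\<^esub> (a \<otimes>\<^bsub>G\<^esub> c) = c" if "a \<in> carrier G" "c \<in> carrier G" for a c
              using that by (simp add: G.m_assoc[symmetric])
            show ?thesis
              using t g g1 g2 by (auto simp: tuples_iff h_def G.m_assoc cancel cancel2)
          qed
          have "b t y' = Bx x (map (\<lambda>z. inv\<^bsub>G\<^esub> g2 \<otimes>\<^bsub>G\<^esub> z) t)"
            by (simp add: b_def same x_def g2_def)
          also have "\<dots> = Bx x (map (\<lambda>z. inv\<^bsub>G\<^esub> g1 \<otimes>\<^bsub>G\<^esub> z) (map (\<lambda>z. g \<otimes>\<^bsub>G\<^esub> z) t))"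
          proof -
            have tt: "map (\<lambda>z. inv\<^bsub>G\<^esub> g1 \<otimes>\<^bsub>G\<^esub> z) (map (\<lambda>z. g \<otimes>\<^bsub>G\<^esub> z) t) \<in> tuples G k"
              using maptup[OF _ maptup[OF g t]] g1 by blast
            have inv: "\<forall>h\<in>stabilizer G \<phi> x. \<forall>t\<in>tuples G k. Bx x (map (\<lambda>z. h \<otimes>\<^bsub>G\<^esub> z) t) = Bx x t"
              using Px unfolding P_def by blast
            show ?thesis unfolding eqmap by (rule inv[rule_format, OF hS tt])
          qed
          also have "\<dots> = b (map (\<lambda>z. g \<otimes>\<^bsub>G\<^esub> z) t) y"
            by (simp add: b_def x_def g1_def)
          finally show "b (map (\<lambda>h. g \<otimes>\<^bsub>G\<^esub> h) t) y = b t (\<phi> (inv\<^bsub>G\<^esub> g) y)"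
            by (simp add: y'_def)
        qed
      qed
      show "\<forall>t\<in>tuples G (k + 1). \<forall>y\<in>X. coboundary b t y = f t y"
      proof (intro ballI)
        fix t y assume t: "t \<in> tuples G (k + 1)" and y: "y \<in> X"
        have g1: "gp y \<in> carrier G" "\<phi> (gp y) (xp y) = y" using gp[OF y] by simp_all
        have "coboundary b t y = cob (Bx (xp y)) (map (\<lambda>z. inv\<^bsub>G\<^esub> (gp y) \<otimes>\<^bsub>G\<^esub> z) t)"
          unfolding coboundary_cob b_def by (rule cob_map)
        also have "\<dots> = f (map (\<lambda>z. inv\<^bsub>G\<^esub> (gp y) \<otimes>\<^bsub>G\<^esub> z) t) (xp y)"
          using Bx[OF y] maptup[OF _ t] g1 unfolding P_def by simp
        also have "\<dots> = f t (\<phi> (inv\<^bsub>G\<^esub> (inv\<^bsub>G\<^esub> (gp y))) (xp y))"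
          using finv g1 t xpX[OF y] by simp
        also have "\<dots> = f t y" using g1 by simp
        finally show "coboundary b t y = f t y" .
      qed
    qed
  qed
qed

end
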